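(* Let $\xi\in\mathbb R$ and let $(c_k)_{k\in\mathbb Z}$ be complex numbers with $|c_k|\le Ce^{-\delta|k|}$ for all $k$, for some $C,\delta>0$. Then for every $0<\varepsilon<\delta/2$ the series $\sum_{k\in\mathbb Z}c_k\rho_{\xi,k}$ converges in $H(S_{\delta/2-\varepsilon})$, i.e. uniformly on each set $\{z\in S_{\delta/2-\varepsilon}:|z|\le n\}$, $n\ge1$.
   Context: $\rho_1(z)=z\int_0^z e^{-s^2}ds$ is entire and even, so there is an entire $\rho_2$ with $\rho_1(z)=\rho_2(z^2)$. For $\xi\in\mathbb R$, $k\in\mathbb Z$, $\rho_{\xi,k}(z)=\frac2\pi\big(2e^{(\xi+ik)z}\rho_2((\xi+ik)z)+1\big)$. $S_\eta=\{z\in\mathbb C:|\operatorname{Im}z|\le\eta\}$; $H(\Omega)$ denotes the Fréchet space of holomorphic functions on $\Omega$ with seminorms $\|f\|_n=\sup\{|f(z)|:z\in\Omega,|z|\le n\}$. *)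

theory Defs
  imports "HOL-Complex_Analysis.Complex_Analysis"
begin

definition rho1 :: "complex \<Rightarrow> complex" where
  "rho1 z = z * contour_integral (linepath 0 z) (\<lambda>s. exp (- (s^2)))"

text \<open>rho1 is even, so rho1 (csqrt w) does not depend on the choice of square root;
  this is the entire function rho2 with rho1 z = rho2 (z^2).\<close>
definition rho2 :: "complex \<Rightarrow> complex" where
  "rho2 w = rho1 (csqrt w)"

definition rho_xk :: "real \<Rightarrow> int \<Rightarrow> complex \<Rightarrow> complex" where
  "rho_xk \<xi> k z = (2 / of_real pi) *
     (2 * exp ((of_real \<xi> + \<i> * of_int k) * z) * rho2 ((of_real \<xi> + \<i> * of_int k) * z) + 1)"

definition strip :: "real \<Rightarrow> complex set" where
  "strip \<eta> = {z. \<bar>Im z\<bar> \<le> \<eta>}"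

end

theory Submission
  imports Defs
begin

lemma ci_bound:
  "norm (contour_integral (linepath 0 w) (\<lambda>s. exp (- (s^2)))) \<le> exp \<bar>Re (w^2)\<bar> * norm w"
proof -
  have ci: "((\<lambda>s. exp (- (s^2))) has_contour_integral
      contour_integral (linepath 0 w) (\<lambda>s. exp (- (s^2)))) (linepath 0 w)"
    by (intro has_contour_integral_integral contour_integrable_continuous_linepath continuous_intros)
  have "norm (exp (- (x^2))) \<le> exp \<bar>Re (w^2)\<bar>" if xs: "x \<in> closed_segment 0 w" for x
  proof -
    obtain u::real where u: "0 \<le> u" "u \<le> 1" "x = u *\<^sub>R w"
    proof -
      have "\<exists>u. 0 \<le> u \<and> u \<le> 1 \<and> x = u *\<^sub>R w" using xs by (simp add: in_segment)
      thus ?thesis using that by blast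
    qed
    have "x^2 = of_real (u^2) * w^2" using u(3) by (simp add: scaleR_conv_of_real power_mult_distrib)
    hence "Re (- (x^2)) = - (u^2 * Re (w^2))" by simp
    also have "\<dots> \<le> \<bar>Re (w^2)\<bar>"
    proof -
      have "u^2 \<le> 1" using u by (simp add: power_le_one)
      hence "\<bar>u^2 * Re (w^2)\<bar> \<le> \<bar>Re (w^2)\<bar>"
        by (simp add: abs_mult mult_left_le_one_le)
      thus ?thesis by linarith
    qed
    finally show ?thesis by simp
  qed
  from has_contour_integral_bound_linepath[OF ci _ this] show ?thesis by simp
qed

lemma rho2_bound: "norm (rho2 u) \<le> norm u * exp \<bar>Re u\<bar>"
proof -
  have "norm (rho2 u) = norm (csqrt u) * norm (contour_integral (linepath 0 (csqrt u)) (\<lambda>s. exp (- (s^2))))"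
    by (simp add: rho2_def rho1_def norm_mult)
  also have "\<dots> \<le> norm (csqrt u) * (exp \<bar>Re ((csqrt u)^2)\<bar> * norm (csqrt u))"
    by (intro mult_left_mono ci_bound) auto
  also have "\<dots> = norm u * exp \<bar>Re u\<bar>"
  proof -
    have "norm (csqrt u) * norm (csqrt u) = norm u"
      by (metis norm_mult power2_csqrt power2_eq_square)
    moreover have "Re ((csqrt u)^2) = Re u" by (simp only: power2_csqrt)
    ultimately show ?thesis by (metis mult.commute mult.left_commute)
  qed
  finally show ?thesis .
qed

lemma rho_bound:
  "norm (rho_xk \<xi> k z) \<le> (2 / pi) * (2 * norm ((of_real \<xi> + \<i> * of_int k) * z)
      * exp (2 * \<bar>Re ((of_real \<xi> + \<i> * of_int k) * z)\<bar>) + 1)"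
proof -
  define u where "u = (of_real \<xi> + \<i> * of_int k) * z"
  have eq: "norm (rho_xk \<xi> k z) = (2 / pi) * norm (2 * exp u * rho2 u + 1)"
  proof -
    have "norm (2 / complex_of_real pi) = 2 / pi" by (simp add: norm_divide)
    moreover have "rho_xk \<xi> k z = (2 / complex_of_real pi) * (2 * exp u * rho2 u + 1)"
      unfolding rho_xk_def u_def by (rule refl)
    ultimately show ?thesis by (simp only: norm_mult)
  qed
  have b1: "norm (2 * exp u * rho2 u + 1) \<le> 2 * exp (Re u) * (norm u * exp \<bar>Re u\<bar>) + 1"
  proof -
    have "norm (2 * exp u * rho2 u + 1) \<le> norm (2 * exp u * rho2 u) + 1"
      using norm_triangle_ineq[of "2 * exp u * rho2 u" 1] by simp
    also have "norm (2 * exp u * rho2 u) = 2 * exp (Re u) * norm (rho2 u)"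
      unfolding norm_mult by simp
    also have "\<dots> \<le> 2 * exp (Re u) * (norm u * exp \<bar>Re u\<bar>)"
      by (intro mult_left_mono rho2_bound) auto
    finally show ?thesis by simp
  qed
  have b2: "2 * exp (Re u) * (norm u * exp \<bar>Re u\<bar>) \<le> 2 * norm u * exp (2 * \<bar>Re u\<bar>)"
  proof -
    have "exp (Re u) \<le> exp \<bar>Re u\<bar>" by simp
    hence "exp (Re u) * exp \<bar>Re u\<bar> \<le> exp (2 * \<bar>Re u\<bar>)"
    proof -
      have "exp (2 * \<bar>Re u\<bar>) = exp \<bar>Re u\<bar> * exp \<bar>Re u\<bar>" by (metis exp_add mult_2)
      moreover have "exp (Re u) * exp \<bar>Re u\<bar> \<le> exp \<bar>Re u\<bar> * exp \<bar>Re u\<bar>"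
        using \<open>exp (Re u) \<le> exp \<bar>Re u\<bar>\<close> by (intro mult_right_mono) auto
      ultimately show ?thesis by simp
    qed
    hence "(2 * norm u) * (exp (Re u) * exp \<bar>Re u\<bar>) \<le> (2 * norm u) * exp (2 * \<bar>Re u\<bar>)"
      by (intro mult_left_mono) auto
    thus ?thesis by (simp only: mult_ac)
  qed
  have "norm (rho_xk \<xi> k z) \<le> (2 / pi) * (2 * norm u * exp (2 * \<bar>Re u\<bar>) + 1)"
    unfolding eq using b1 b2 by (intro mult_left_mono) auto
  thus ?thesis unfolding u_def .
qed

lemma aux_poly_exp:
  fixes t \<epsilon> :: real assumes "t \<ge> 0" "\<epsilon> > 0"
  shows "exp (- (2*\<epsilon>) * t) * (1 + t) \<le> (1 + 1/\<epsilon>) * exp (- \<epsilon> * t)"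
proof -
  have "1 + t \<le> (1 + 1/\<epsilon>) * (1 + \<epsilon> * t)"
    using assms by (simp add: field_simps)
  also have "1 + \<epsilon> * t \<le> exp (\<epsilon> * t)" by (rule exp_ge_add_one_self)
  hence "(1 + 1/\<epsilon>) * (1 + \<epsilon> * t) \<le> (1 + 1/\<epsilon>) * exp (\<epsilon> * t)"
    using assms by (intro mult_left_mono) auto
  finally have "exp (- (2*\<epsilon>) * t) * (1 + t) \<le> exp (- (2*\<epsilon>) * t) * ((1 + 1/\<epsilon>) * exp (\<epsilon> * t))"
    by (intro mult_left_mono) auto
  also have "\<dots> = (1 + 1/\<epsilon>) * (exp (- (2*\<epsilon>) * t) * exp (\<epsilon> * t))" by (simp only: mult_ac)
  also have "exp (- (2*\<epsilon>) * t) * exp (\<epsilon> * t) = exp (- \<epsilon> * t)"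
    by (simp add: exp_add[symmetric] algebra_simps)
  finally show ?thesis .
qed

lemma term_bound:
  fixes \<xi> C \<delta> \<epsilon> :: real and c :: "int \<Rightarrow> complex" and n :: real
  assumes "C > 0" and "\<delta> > 0"
    and cb: "norm (c k) \<le> C * exp (- \<delta> * \<bar>real_of_int k\<bar>)"
    and "0 < \<epsilon>" and "\<epsilon> < \<delta> / 2"
    and zI: "\<bar>Im z\<bar> \<le> \<delta>/2 - \<epsilon>" and zn: "norm z \<le> n"
  shows "norm (c k * rho_xk \<xi> k z) \<le>
     (C * (2/pi) * (2 * (\<bar>\<xi>\<bar> + 1) * n * exp (2 * \<bar>\<xi>\<bar> * n) + 1) * (1 + 1/\<epsilon>)) * exp (- \<epsilon> * \<bar>real_of_int k\<bar>)"
proof -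
  define t where "t = \<bar>real_of_int k\<bar>"
  define \<eta> where "\<eta> = \<delta>/2 - \<epsilon>"
  define a where "a = of_real \<xi> + \<i> * (of_int k :: complex)"
  define u where "u = a * z"
  define E where "E = exp (2 * \<bar>\<xi>\<bar> * n)"
  have t0: "t \<ge> 0" and n0: "n \<ge> 0" using zn by (auto simp: t_def intro: order_trans[OF norm_ge_zero])
  have eta0: "\<eta> \<ge> 0" using assms by (simp add: \<eta>_def)
  have "Re u = \<xi> * Re z - of_int k * Im z" by (simp add: u_def a_def)
  hence "\<bar>Re u\<bar> \<le> \<bar>\<xi>\<bar> * \<bar>Re z\<bar> + t * \<bar>Im z\<bar>"
    using abs_triangle_ineq4[of "\<xi> * Re z" "of_int k * Im z"] by (simp add: t_def abs_mult)
  also have "\<dots> \<le> \<bar>\<xi>\<bar> * n + t * \<eta>"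
  proof (intro add_mono mult_left_mono)
    show "\<bar>Re z\<bar> \<le> n" using abs_Re_le_cmod[of z] zn by linarith
    show "\<bar>Im z\<bar> \<le> \<eta>" using zI by (simp add: \<eta>_def)
  qed (auto simp: t0)
  finally have Ru: "\<bar>Re u\<bar> \<le> \<bar>\<xi>\<bar> * n + t * \<eta>" .
  have "norm a \<le> norm (of_real \<xi> :: complex) + norm (\<i> * (of_int k :: complex))"
    unfolding a_def by (rule norm_triangle_ineq)
  hence "norm a \<le> \<bar>\<xi>\<bar> + t" by (simp add: t_def norm_mult)
  hence Nu: "norm u \<le> (\<bar>\<xi>\<bar> + t) * n"
    unfolding u_def norm_mult using zn t0 by (intro mult_mono) auto
  have rb: "norm (rho_xk \<xi> k z) \<le> (2/pi) * (2 * ((\<bar>\<xi>\<bar> + t) * n) * (E * exp (2 * t * \<eta>)) + 1)"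
  proof -
    have "norm (rho_xk \<xi> k z) \<le> (2 / pi) * (2 * norm u * exp (2 * \<bar>Re u\<bar>) + 1)"
      using rho_bound[of \<xi> k z] by (simp add: u_def a_def)
    also have "exp (2 * \<bar>Re u\<bar>) \<le> E * exp (2 * t * \<eta>)"
    proof -
      have "exp (2 * \<bar>Re u\<bar>) \<le> exp (2 * \<bar>\<xi>\<bar> * n + 2 * t * \<eta>)" using Ru by simp
      thus ?thesis by (simp add: E_def exp_add)
    qed
    hence "(2 / pi) * (2 * norm u * exp (2 * \<bar>Re u\<bar>) + 1) \<le> (2/pi) * (2 * ((\<bar>\<xi>\<bar> + t) * n) * (E * exp (2 * t * \<eta>)) + 1)"
      using Nu t0 n0 by (intro mult_left_mono add_mono mult_mono) auto
    finally show ?thesis .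
  qed
  define G where "G = exp (- (2*\<epsilon>) * t)"
  have G1: "exp (- \<delta> * t) * exp (2 * t * \<eta>) = G"
    by (simp add: G_def \<eta>_def exp_add[symmetric] algebra_simps)
  have G2: "exp (- \<delta> * t) \<le> G"
    using assms t0 by (simp add: G_def mult_right_mono)
  have "norm (c k * rho_xk \<xi> k z) \<le> (C * exp (- \<delta> * t)) * ((2/pi) * (2 * ((\<bar>\<xi>\<bar> + t) * n) * (E * exp (2 * t * \<eta>)) + 1))"
    unfolding norm_mult using cb rb \<open>C > 0\<close> by (intro mult_mono) (auto simp: t_def)
  also have "\<dots> = C * (2/pi) * (2 * ((\<bar>\<xi>\<bar> + t) * n) * E * (exp (- \<delta> * t) * exp (2 * t * \<eta>)) + exp (- \<delta> * t))"
    by (simp add: algebra_simps)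
  also have "\<dots> \<le> C * (2/pi) * (2 * ((\<bar>\<xi>\<bar> + t) * n) * E * G + G)"
    unfolding G1 using G2 assms t0 n0 by (intro mult_left_mono add_mono) (auto simp: E_def)
  also have "\<dots> = C * (2/pi) * (G * (2 * (\<bar>\<xi>\<bar> + t) * n * E + 1))"
    by (simp add: algebra_simps)
  also have "\<dots> \<le> C * (2/pi) * (G * ((1 + t) * (2 * (\<bar>\<xi>\<bar> + 1) * n * E + 1)))"
  proof -
    have "\<bar>\<xi>\<bar> + t \<le> (\<bar>\<xi>\<bar> + 1) * (1 + t)" using t0 by (simp add: algebra_simps)
    hence "2 * (\<bar>\<xi>\<bar> + t) * n * E \<le> 2 * ((\<bar>\<xi>\<bar> + 1) * (1 + t)) * n * E"
      using n0 by (intro mult_right_mono) (auto simp: E_def)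
    hence "2 * (\<bar>\<xi>\<bar> + t) * n * E + 1 \<le> (1 + t) * (2 * (\<bar>\<xi>\<bar> + 1) * n * E + 1)"
      using t0 by (simp add: algebra_simps)
    thus ?thesis using assms by (intro mult_left_mono) (auto simp: G_def)
  qed
  also have "\<dots> = C * (2/pi) * (2 * (\<bar>\<xi>\<bar> + 1) * n * E + 1) * (G * (1 + t))"
    by (simp only: mult_ac)
  also have "\<dots> \<le> C * (2/pi) * (2 * (\<bar>\<xi>\<bar> + 1) * n * E + 1) * ((1 + 1/\<epsilon>) * exp (- \<epsilon> * t))"
    unfolding G_def using aux_poly_exp[OF t0 \<open>0 < \<epsilon>\<close>] assms n0
    by (intro mult_left_mono) (auto simp: E_def)
  finally show ?thesis by (simp add: t_def E_def mult_ac)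
qed

lemma exp_int_summable:
  fixes \<epsilon> :: real assumes "\<epsilon> > 0"
  shows "(\<lambda>k::int. exp (- \<epsilon> * \<bar>real_of_int k\<bar>)) summable_on UNIV"
proof -
  have "(\<lambda>n::nat. exp (- \<epsilon> * real n)) = (\<lambda>n. exp (- \<epsilon>) ^ n)"
    by (auto simp: exp_of_nat_mult[symmetric] mult.commute)
  hence "summable (\<lambda>n::nat. exp (- \<epsilon> * real n))"
    using assms by (auto intro!: summable_geometric)
  hence g: "(\<lambda>n::nat. exp (- \<epsilon> * real n)) summable_on UNIV"
    by (subst summable_on_UNIV_nonneg_real_iff) auto
  have U: "(UNIV :: int set) = range int \<union> range (\<lambda>n. - int n)"
  proof -
    have "k \<in> range int \<union> range (\<lambda>n. - int n)" for k :: int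
    proof (cases "k \<ge> 0")
      case True
      hence "k = int (nat k)" by simp
      thus ?thesis by blast
    next
      case False
      hence "k = - int (nat (-k))" by simp
      thus ?thesis by blast
    qed
    thus ?thesis by blast
  qed
  have 1: "(\<lambda>k::int. exp (- \<epsilon> * \<bar>real_of_int k\<bar>)) summable_on range int"
    by (subst summable_on_reindex) (use g in \<open>auto simp: o_def inj_on_def\<close>)
  have 2: "(\<lambda>k::int. exp (- \<epsilon> * \<bar>real_of_int k\<bar>)) summable_on range (\<lambda>n. - int n)"
    by (subst summable_on_reindex) (use g in \<open>auto simp: o_def inj_on_def\<close>)
  show ?thesis unfolding U by (rule summable_on_union[OF 1 2])
qed

theorem lemma5:
  fixes \<xi> C \<delta> \<epsilon> :: real and c :: "int \<Rightarrow> complex"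
  assumes "C > 0" and "\<delta> > 0"
    and "\<And>k. norm (c k) \<le> C * exp (- \<delta> * \<bar>real_of_int k\<bar>)"
    and "0 < \<epsilon>" and "\<epsilon> < \<delta> / 2"
  shows "\<exists>f. \<forall>n::nat. n \<ge> 1 \<longrightarrow>
           uniform_limit {z \<in> strip (\<delta> / 2 - \<epsilon>). norm z \<le> real n}
             (\<lambda>I z. \<Sum>k\<in>I. c k * rho_xk \<xi> k z) f (finite_subsets_at_top UNIV)"
proof (intro exI allI impI)
  fix n :: nat assume "n \<ge> 1"
  define K where "K = C * (2/pi) * (2 * (\<bar>\<xi>\<bar> + 1) * real n * exp (2 * \<bar>\<xi>\<bar> * real n) + 1) * (1 + 1/\<epsilon>)"
  show "uniform_limit {z \<in> strip (\<delta> / 2 - \<epsilon>). norm z \<le> real n}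
             (\<lambda>I z. \<Sum>k\<in>I. c k * rho_xk \<xi> k z) (\<lambda>z. \<Sum>\<^sub>\<infinity>k\<in>UNIV. c k * rho_xk \<xi> k z) (finite_subsets_at_top UNIV)"
  proof (rule Weierstrass_m_test_general[where M = "\<lambda>k. K * exp (- \<epsilon> * \<bar>real_of_int k\<bar>)"])
    fix k :: int and z assume "z \<in> {z \<in> strip (\<delta> / 2 - \<epsilon>). norm z \<le> real n}"
    hence "\<bar>Im z\<bar> \<le> \<delta>/2 - \<epsilon>" "norm z \<le> real n" by (auto simp: strip_def)
    from term_bound[where c=c and k=k and \<xi>=\<xi>, OF assms(1,2) assms(3)[of k] assms(4,5) this]
    show "norm (c k * rho_xk \<xi> k z) \<le> K * exp (- \<epsilon> * \<bar>real_of_int k\<bar>)"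
      by (simp add: K_def)
  next
    show "(\<lambda>k. K * exp (- \<epsilon> * \<bar>real_of_int k\<bar>)) summable_on UNIV"
      by (intro summable_on_cmult_right exp_int_summable) (use assms in auto)
  qed
qed

end
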